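(* For each $s\ge0$, $\big(\mathrm{ad}(\Omega_0)+\mu(\Omega')\big)^s(\mathbf 1\otimes\mathbf I)$ belongs to $\mathcal B^0\otimes\mathcal U(\mathfrak X)$.
   Context: $\mathfrak X$ is the complex Lie algebra generated by $Z_1,Z_{11},Z_2,Z_{22},Z_{12}$ subject only to $[Z_1,Z_2]=[Z_{11},Z_2]=[Z_1,Z_{22}]=0$ and $[Z_{11},Z_{22}]=-[Z_{11},Z_{12}]=[Z_{22},Z_{12}]=-[Z_1-Z_2,Z_{12}]$; $\mathcal U(\mathfrak X)$ its universal enveloping algebra with unit $\mathbf I$. On $\mathbf P^1\times\mathbf P^1$: $\zeta_i=dz_i/z_i$, $\zeta_{ii}=dz_i/(1-z_i)$ ($i=1,2$), $\zeta_{12}=d(z_1z_2)/(1-z_1z_2)$. $S(A)$, $A=\{\zeta_1,\zeta_{11},\zeta_2,\zeta_{22},\zeta_{12}\}$, is the space with basis the words in $A$ (empty word $\mathbf 1$), with concatenation $\circ$. An element $\sum_Ic_I\omega_{i_1}\circ\cdots\circ\omega_{i_s}\in S_s(A)$ satisfies Chen's integrability condition if for each $1\le l<s$, $\sum_Ic_I\omega_{i_1}\otimes\cdots\otimes(\omega_{i_l}\wedge\omega_{i_{l+1}})\otimes\cdots\otimes\omega_{i_s}=0$ as a multiple differential form; $\mathcal B$ is the span of homogeneous elements satisfying this, and $\mathcal B^0$ the subspace of elements none of whose words ends in $\zeta_1$ or $\zeta_2$. On $S(A)\otimes\mathcal U(\mathfrak X)$: $\mathrm{ad}(\omega\otimes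 X)(\varphi\otimes F)=(\omega\circ\varphi)\otimes[X,F]$, $\mu(\omega\otimes X)(\varphi\otimes F)=(\omega\circ\varphi)\otimes XF$ (letters $\omega$, $X\in\mathfrak X$), extended linearly; $\Omega_0=\zeta_1\otimes Z_1+\zeta_2\otimes Z_2$, $\Omega'=\zeta_{11}\otimes Z_{11}+\zeta_{22}\otimes Z_{22}+\zeta_{12}\otimes Z_{12}$. *)

theory Defs
  imports Complex_Main
begin

text \<open>Index set for the five letters of A = {zeta_1, zeta_11, zeta_2, zeta_22, zeta_12}
  and simultaneously for the five generators Z_1, Z_11, Z_2, Z_22, Z_12 of the Lie algebra X.\<close>
datatype idx = I1 | I11 | I2 | I22 | I12

text \<open>Elements of the free associative algebra on Z_1,...,Z_12 (coefficient functions on words;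
  the genuine elements are the finitely supported ones), and of S(A) (x) (free algebra).\<close>
type_synonym fa = "idx list \<Rightarrow> complex"
type_synonym tens = "idx list \<Rightarrow> fa"

definition fin_supp :: "('a \<Rightarrow> complex) \<Rightarrow> bool" where
  "fin_supp f \<longleftrightarrow> finite {u. f u \<noteq> 0}"

definition fa_add :: "fa \<Rightarrow> fa \<Rightarrow> fa" where
  "fa_add f g = (\<lambda>u. f u + g u)"

definition fa_diff :: "fa \<Rightarrow> fa \<Rightarrow> fa" where
  "fa_diff f g = (\<lambda>u. f u - g u)"

definition fa_mul :: "fa \<Rightarrow> fa \<Rightarrow> fa" where
  "fa_mul f g = (\<lambda>w. \<Sum>i\<le>length w. f (take i w) * g (drop i w))"

definition fa_mono :: "idx list \<Rightarrow> fa" where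
  "fa_mono v = (\<lambda>u. if u = v then 1 else 0)"

definition Zg :: "idx \<Rightarrow> fa" where
  "Zg i = fa_mono [i]"

definition fa_one :: fa where
  "fa_one = fa_mono []"

definition fa_comm :: "fa \<Rightarrow> fa \<Rightarrow> fa" where
  "fa_comm x y = fa_diff (fa_mul x y) (fa_mul y x)"

text \<open>Defining relations of X, written as elements of the free associative algebra
  (brackets are commutators).\<close>
definition U_rels :: "fa set" where
  "U_rels = {fa_comm (Zg I1) (Zg I2),
             fa_comm (Zg I11) (Zg I2),
             fa_comm (Zg I1) (Zg I22),
             fa_add (fa_comm (Zg I11) (Zg I22)) (fa_comm (Zg I11) (Zg I12)),
             fa_diff (fa_comm (Zg I11) (Zg I22)) (fa_comm (Zg I22) (Zg I12)),
             fa_add (fa_comm (Zg I11) (Zg I22)) (fa_comm (fa_diff (Zg I1) (Zg I2)) (Zg I12))}"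

inductive_set cspan :: "('a \<Rightarrow> complex) set \<Rightarrow> ('a \<Rightarrow> complex) set" for G where
  cspan_zero: "(\<lambda>_. 0) \<in> cspan G"
| cspan_step: "g \<in> G \<Longrightarrow> f \<in> cspan G \<Longrightarrow> (\<lambda>u. c * g u + f u) \<in> cspan G"

text \<open>The two-sided ideal J generated by the relations; U(X) = free algebra / J.\<close>
definition U_ideal :: "fa set" where
  "U_ideal = cspan {fa_mul (fa_mul u r) v | u r v. fin_supp u \<and> fin_supp v \<and> r \<in> U_rels}"

inductive_set tspan :: "tens set \<Rightarrow> tens set" for G where
  tspan_zero: "(\<lambda>_ _. 0) \<in> tspan G"
| tspan_step: "g \<in> G \<Longrightarrow> t \<in> tspan G \<Longrightarrow> (\<lambda>w u. c * g w u + t w u) \<in> tspan G"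

text \<open>Coefficients of the 1-forms in the affine chart (z1,z2) of P^1 x P^1:
  coef a p False = coefficient of dz1, coef a p True = coefficient of dz2.\<close>
definition coef :: "idx \<Rightarrow> complex \<times> complex \<Rightarrow> bool \<Rightarrow> complex" where
  "coef a p j = (let z1 = fst p; z2 = snd p in
     (case a of
        I1  \<Rightarrow> if j then 0 else 1 / z1
      | I11 \<Rightarrow> if j then 0 else 1 / (1 - z1)
      | I2  \<Rightarrow> if j then 1 / z2 else 0
      | I22 \<Rightarrow> if j then 1 / (1 - z2) else 0
      | I12 \<Rightarrow> if j then z1 / (1 - z1 * z2) else z2 / (1 - z1 * z2)))"

text \<open>Coefficient of dz1 /\ dz2 in zeta_a /\ zeta_b.\<close>
definition wedge :: "idx \<Rightarrow> idx \<Rightarrow> complex \<times> complex \<Rightarrow> complex" where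
  "wedge a b p = coef a p False * coef b p True - coef a p True * coef b p False"

text \<open>Points of the chart where all forms are holomorphic.\<close>
definition goodpt :: "complex \<times> complex \<Rightarrow> bool" where
  "goodpt p \<longleftrightarrow> fst p \<noteq> 0 \<and> fst p \<noteq> 1 \<and> snd p \<noteq> 0 \<and> snd p \<noteq> 1 \<and> fst p * snd p \<noteq> 1"

text \<open>The multiple form omega_{i_1} (x) ... (x) (omega_{i_l} /\ omega_{i_{l+1}}) (x) ... (x) omega_{i_s}
  (1-based l), realised as a function of one point per tensor slot (slots 0..s-2) and a choice of
  component (dz1 or dz2) for each 1-form slot.\<close>
definition mform :: "idx list \<Rightarrow> nat \<Rightarrow> (nat \<Rightarrow> complex \<times> complex) \<Rightarrow> (nat \<Rightarrow> bool) \<Rightarrow> complex" where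
  "mform I l x j =
     (\<Prod>k<l - 1. coef (I ! k) (x k) (j k)) *
     wedge (I ! (l - 1)) (I ! l) (x (l - 1)) *
     (\<Prod>k\<in>{l..<length I - 1}. coef (I ! Suc k) (x k) (j k))"

definition homogeneous :: "(idx list \<Rightarrow> complex) \<Rightarrow> nat \<Rightarrow> bool" where
  "homogeneous c s \<longleftrightarrow> (\<forall>w. c w \<noteq> 0 \<longrightarrow> length w = s)"

definition chen :: "(idx list \<Rightarrow> complex) \<Rightarrow> nat \<Rightarrow> bool" where
  "chen c s \<longleftrightarrow> (\<forall>l. 1 \<le> l \<and> l < s \<longrightarrow>
      (\<forall>x j. (\<forall>k. goodpt (x k)) \<longrightarrow>
         (\<Sum>I\<in>{I. length I = s}. c I * mform I l x j) = 0))"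

definition chenB :: "(idx list \<Rightarrow> complex) set" where
  "chenB = cspan {c. \<exists>s. homogeneous c s \<and> chen c s}"

definition chenB0 :: "(idx list \<Rightarrow> complex) set" where
  "chenB0 = {b \<in> chenB. \<forall>w. b w \<noteq> 0 \<longrightarrow> w \<noteq> [] \<longrightarrow> last w \<notin> {I1, I2}}"

text \<open>Membership of (the image in S(A) (x) U(X) of) a tensor in B^0 (x) U(X):
  it differs from an element of B^0 (x) (free algebra) by an element of S(A) (x) J.\<close>
definition in_B0_U :: "tens \<Rightarrow> bool" where
  "in_B0_U T \<longleftrightarrow> (\<exists>y z.
      y \<in> tspan {(\<lambda>w u. b w * F u) | b F. b \<in> chenB0 \<and> fin_supp F} \<and>
      finite {w. z w \<noteq> (\<lambda>_. 0)} \<and> (\<forall>w. z w \<in> U_ideal) \<and>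
      T = (\<lambda>w u. y w u + z w u))"

definition ad_lt :: "idx \<Rightarrow> fa \<Rightarrow> tens \<Rightarrow> tens" where
  "ad_lt a X T = (\<lambda>w. case w of [] \<Rightarrow> (\<lambda>_. 0)
                    | b # v \<Rightarrow> if b = a then fa_comm X (T v) else (\<lambda>_. 0))"

definition mu_lt :: "idx \<Rightarrow> fa \<Rightarrow> tens \<Rightarrow> tens" where
  "mu_lt a X T = (\<lambda>w. case w of [] \<Rightarrow> (\<lambda>_. 0)
                    | b # v \<Rightarrow> if b = a then fa_mul X (T v) else (\<lambda>_. 0))"

definition tens_add :: "tens \<Rightarrow> tens \<Rightarrow> tens" where
  "tens_add S T = (\<lambda>w u. S w u + T w u)"

text \<open>ad(Omega_0) + mu(Omega').\<close>
definition Lop :: "tens \<Rightarrow> tens" where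
  "Lop T = tens_add (tens_add (ad_lt I1 (Zg I1) T) (ad_lt I2 (Zg I2) T))
             (tens_add (mu_lt I11 (Zg I11) T)
               (tens_add (mu_lt I22 (Zg I22) T) (mu_lt I12 (Zg I12) T)))"

text \<open>1 (x) I.\<close>
definition unitT :: tens where
  "unitT = (\<lambda>w. if w = [] then fa_one else (\<lambda>_. 0))"

end

theory Submission
  imports Defs
begin

lemma UNIV_idx: "(UNIV :: idx set) = {I1, I11, I2, I22, I12}"
  using idx.exhaust by auto

instance idx :: finite
  by standard (simp add: UNIV_idx)

lemma fa_mul_assoc: "fa_mul (fa_mul f g) h = fa_mul f (fa_mul g h)"
proof (rule ext)
  fix w :: "idx list"
  define n where "n = length w"
  define F where "F = (\<lambda>j k. f (take j w) * g (take k (drop j w)) * h (drop (j + k) w))"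
  have L: "fa_mul (fa_mul f g) h w = (\<Sum>i\<le>n. \<Sum>j\<le>i. F j (i - j))"
    unfolding fa_mul_def n_def[symmetric]
  proof (rule sum.cong[OF refl])
    fix i assume "i \<in> {..n}"
    hence i: "i \<le> n" by simp
    have "length (take i w) = i" using i n_def by simp
    thus "(\<Sum>j\<le>length (take i w). f (take j (take i w)) * g (drop j (take i w))) * h (drop i w) =
          (\<Sum>j\<le>i. F j (i - j))"
      unfolding F_def by (auto simp: sum_distrib_right drop_take min_def intro!: sum.cong)
  qed
  have R: "fa_mul f (fa_mul g h) w = (\<Sum>j\<le>n. \<Sum>k\<le>n-j. F j k)"
    unfolding fa_mul_def n_def[symmetric]
    by (auto simp: sum_distrib_left F_def n_def add.commute mult.assoc intro!: sum.cong)
  have "(\<Sum>i\<le>n. \<Sum>j\<le>i. F j (i - j)) = (\<Sum>(j,k)\<in>{(j,k). j+k \<le> n}. F j k)"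
    by (rule sum.triangle_reindex_eq[symmetric])
  also have "{(j,k). j+k \<le> n} = Sigma {..n} (\<lambda>j. {..n-j})" by auto
  also have "(\<Sum>(j,k)\<in>Sigma {..n} (\<lambda>j. {..n-j}). F j k) = (\<Sum>j\<le>n. \<Sum>k\<le>n-j. F j k)"
    by (rule sum.Sigma[symmetric]) auto
  finally show "fa_mul (fa_mul f g) h w = fa_mul f (fa_mul g h) w" using L R by simp
qed

lemma fa_mul_one_left: "fa_mul fa_one f = f"
proof (rule ext)
  fix w :: "idx list"
  have "fa_mul fa_one f w = (\<Sum>i\<le>length w. if i = 0 then f w else 0)"
    unfolding fa_mul_def fa_one_def fa_mono_def
    by (rule sum.cong) auto
  thus "fa_mul fa_one f w = f w" by simp
qed

lemma fa_mul_one_right: "fa_mul f fa_one = f"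
proof (rule ext)
  fix w :: "idx list"
  have "fa_mul f fa_one w = (\<Sum>i\<le>length w. if i = length w then f w else 0)"
    unfolding fa_mul_def fa_one_def fa_mono_def
    by (rule sum.cong) auto
  thus "fa_mul f fa_one w = f w" by simp
qed

lemma fa_mul_add_right: "fa_mul f (fa_add g h) = fa_add (fa_mul f g) (fa_mul f h)"
  unfolding fa_mul_def fa_add_def by (auto simp: distrib_left sum.distrib)

lemma fa_mul_add_left: "fa_mul (fa_add g h) f = fa_add (fa_mul g f) (fa_mul h f)"
  unfolding fa_mul_def fa_add_def by (auto simp: distrib_right sum.distrib)

lemma fa_mul_zero_right[simp]: "fa_mul f (\<lambda>_. 0) = (\<lambda>_. 0)"
  unfolding fa_mul_def by simp

lemma fa_mul_zero_left[simp]: "fa_mul (\<lambda>_. 0) f = (\<lambda>_. 0)"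
  unfolding fa_mul_def by simp

lemma fa_mul_smult_right: "fa_mul f (\<lambda>u. c * g u) = (\<lambda>u. c * fa_mul f g u)"
  unfolding fa_mul_def by (auto simp: sum_distrib_left algebra_simps)

lemma fa_mul_smult_left: "fa_mul (\<lambda>u. c * g u) f = (\<lambda>u. c * fa_mul g f u)"
  unfolding fa_mul_def by (auto simp: sum_distrib_left algebra_simps)

lemma fa_mul_neg_left: "fa_mul (\<lambda>u. - g u) f = (\<lambda>u. - fa_mul g f u)"
  unfolding fa_mul_def by (auto simp: sum_negf)

typedef fr = "UNIV :: fa set" morphisms rep abs by simp
setup_lifting type_definition_fr

instantiation fr :: ring_1
begin
lift_definition zero_fr :: fr is "\<lambda>_. 0" .
lift_definition one_fr :: fr is fa_one .
lift_definition plus_fr :: "fr \<Rightarrow> fr \<Rightarrow> fr" is fa_add .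
lift_definition minus_fr :: "fr \<Rightarrow> fr \<Rightarrow> fr" is fa_diff .
lift_definition uminus_fr :: "fr \<Rightarrow> fr" is "\<lambda>f u. - f u" .
lift_definition times_fr :: "fr \<Rightarrow> fr \<Rightarrow> fr" is fa_mul .
instance
proof
  fix a b c :: fr
  show "a * b * c = a * (b * c)" by transfer (rule fa_mul_assoc)
  show "1 * a = a" by transfer (rule fa_mul_one_left)
  show "a * 1 = a" by transfer (rule fa_mul_one_right)
  show "(a + b) * c = a * c + b * c" by transfer (rule fa_mul_add_left)
  show "a * (b + c) = a * b + a * c" by transfer (rule fa_mul_add_right)
  show "a + b + c = a + (b + c)" by transfer (auto simp: fa_add_def)
  show "a + b = b + a" by transfer (auto simp: fa_add_def)
  show "0 + a = a" by transfer (auto simp: fa_add_def)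
  show "- a + a = 0" by transfer (auto simp: fa_add_def)
  show "a - b = a + - b" by transfer (auto simp: fa_add_def fa_diff_def)
  show "(0::fr) \<noteq> 1" by transfer (auto simp: fa_one_def fa_mono_def fun_eq_iff)
qed
end

lift_definition smul :: "complex \<Rightarrow> fr \<Rightarrow> fr" is "\<lambda>c f u. c * f u" .
lift_definition Z :: "idx \<Rightarrow> fr" is Zg .

lemma smul_mult_left[simp]: "smul c x * y = smul c (x * y)"
  by transfer (rule fa_mul_smult_left)
lemma smul_mult_right[simp]: "x * smul c y = smul c (x * y)"
  by transfer (rule fa_mul_smult_right)
lemma smul_add[simp]: "smul c (x + y) = smul c x + smul c y"
  by transfer (auto simp: fa_add_def algebra_simps)
lemma smul_diff[simp]: "smul c (x - y) = smul c x - smul c y"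
  by transfer (auto simp: fa_diff_def algebra_simps)
lemma smul_neg[simp]: "smul c (- x) = - smul c x"
  by transfer auto
lemma smul_add_left: "smul (c + d) x = smul c x + smul d x"
  by transfer (auto simp: fa_add_def algebra_simps)
lemma smul_smul[simp]: "smul c (smul d x) = smul (c * d) x"
  by transfer auto
lemma smul_one[simp]: "smul 1 x = x"
  by transfer auto
lemma smul_zero_left[simp]: "smul 0 x = 0"
  by transfer auto
lemma smul_zero_right[simp]: "smul c 0 = 0"
  by transfer auto
lemma smul_neg_left: "smul (- c) x = - smul c x"
  by transfer auto
lemma smul_sum: "smul c (sum f A) = sum (\<lambda>a. smul c (f a)) A"
  by (induction A rule: infinite_finite_induct) auto
lemma smul_sum_left: "smul (sum f A) x = sum (\<lambda>a. smul (f a) x) A"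
  by (induction A rule: infinite_finite_induct) (auto simp: smul_add_left)

lemma rep_sum: "rep (sum f A) = (\<lambda>u. \<Sum>a\<in>A. rep (f a) u)"
  by (induction A rule: infinite_finite_induct) (auto simp: zero_fr.rep_eq plus_fr.rep_eq fa_add_def)


lemma fin_supp_zero[simp]: "fin_supp (\<lambda>_. 0)"
  unfolding fin_supp_def by simp

lemma fin_supp_mono: "fin_supp (fa_mono v)"
  unfolding fin_supp_def fa_mono_def
  by (rule finite_subset[of _ "{v}"]) auto

lemma fin_supp_add: "fin_supp f \<Longrightarrow> fin_supp g \<Longrightarrow> fin_supp (\<lambda>u. f u + g u)"
  unfolding fin_supp_def
  by (rule finite_subset[of _ "{u. f u \<noteq> 0} \<union> {u. g u \<noteq> 0}"]) auto

lemma fin_supp_smult: "fin_supp f \<Longrightarrow> fin_supp (\<lambda>u. c * f u)"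
  unfolding fin_supp_def
  by (rule finite_subset[of _ "{u. f u \<noteq> 0}"]) auto

lemma fin_supp_neg: "fin_supp f \<Longrightarrow> fin_supp (\<lambda>u. - f u)"
  unfolding fin_supp_def by simp

lemma fin_supp_mul: "fin_supp f \<Longrightarrow> fin_supp g \<Longrightarrow> fin_supp (fa_mul f g)"
  unfolding fin_supp_def
proof (rule finite_subset[of _ "(\<lambda>(u,v). u @ v) ` ({u. f u \<noteq> 0} \<times> {v. g v \<noteq> 0})"])
  show "{w. fa_mul f g w \<noteq> 0} \<subseteq> (\<lambda>(u,v). u @ v) ` ({u. f u \<noteq> 0} \<times> {v. g v \<noteq> 0})"
  proof
    fix w assume "w \<in> {w. fa_mul f g w \<noteq> 0}"
    hence "(\<Sum>i\<le>length w. f (take i w) * g (drop i w)) \<noteq> 0" unfolding fa_mul_def by simp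
    then obtain i where "f (take i w) * g (drop i w) \<noteq> 0"
      by (meson sum.not_neutral_contains_not_neutral)
    hence "(take i w, drop i w) \<in> {u. f u \<noteq> 0} \<times> {v. g v \<noteq> 0}" by simp
    hence "(\<lambda>(u,v). u @ v) (take i w, drop i w) \<in> (\<lambda>(u,v). u @ v) ` ({u. f u \<noteq> 0} \<times> {v. g v \<noteq> 0})"
      by (rule imageI)
    thus "w \<in> (\<lambda>(u,v). u @ v) ` ({u. f u \<noteq> 0} \<times> {v. g v \<noteq> 0})" by simp
  qed
qed (intro finite_imageI finite_cartesian_product; assumption)

definition fs :: "fr \<Rightarrow> bool" where "fs x \<longleftrightarrow> fin_supp (rep x)"

lemma fs_0[simp]: "fs 0" unfolding fs_def by (simp add: zero_fr.rep_eq)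
lemma fs_1[simp]: "fs 1" unfolding fs_def by (simp add: one_fr.rep_eq fa_one_def fin_supp_mono)
lemma fs_Z[simp]: "fs (Z a)" unfolding fs_def by (simp add: Z.rep_eq Zg_def fin_supp_mono)
lemma fs_add[simp]: "fs x \<Longrightarrow> fs y \<Longrightarrow> fs (x + y)"
  unfolding fs_def by (simp add: plus_fr.rep_eq fa_add_def fin_supp_add)
lemma fs_neg[simp]: "fs x \<Longrightarrow> fs (- x)"
  unfolding fs_def by (simp add: uminus_fr.rep_eq fin_supp_neg)
lemma fs_diff[simp]: "fs x \<Longrightarrow> fs y \<Longrightarrow> fs (x - y)"
  by (metis diff_conv_add_uminus fs_add fs_neg)
lemma fs_mult[simp]: "fs x \<Longrightarrow> fs y \<Longrightarrow> fs (x * y)"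
  unfolding fs_def by (simp add: times_fr.rep_eq fin_supp_mul)
lemma fs_smul[simp]: "fs x \<Longrightarrow> fs (smul c x)"
  unfolding fs_def by (simp add: smul.rep_eq fin_supp_smult)

lemma cspan_add: "f \<in> cspan G \<Longrightarrow> g \<in> cspan G \<Longrightarrow> (\<lambda>u. f u + g u) \<in> cspan G"
proof (induction f rule: cspan.induct)
  case cspan_zero thus ?case by simp
next
  case (cspan_step g0 f c)
  have "(\<lambda>u. c * g0 u + f u + g u) = (\<lambda>u. c * g0 u + (f u + g u))" by (simp add: algebra_simps)
  thus ?case using cspan_step by (simp add: cspan.cspan_step)
qed

lemma cspan_smult: "f \<in> cspan G \<Longrightarrow> (\<lambda>u. c * f u) \<in> cspan G"
proof (induction f rule: cspan.induct)
  case cspan_zero thus ?case by (simp add: cspan.cspan_zero)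
next
  case (cspan_step g0 f d)
  have "(\<lambda>u. c * (d * g0 u + f u)) = (\<lambda>u. (c * d) * g0 u + c * f u)" by (simp add: algebra_simps)
  thus ?case using cspan_step by (simp add: cspan.cspan_step)
qed

lemma cspan_gen: "g \<in> G \<Longrightarrow> g \<in> cspan G"
  using cspan.cspan_step[of g G "\<lambda>_. 0" 1] by (simp add: cspan.cspan_zero)

lemma cspan_mul_left:
  assumes "f \<in> U_ideal" "fin_supp x" shows "fa_mul x f \<in> U_ideal"
  using assms(1) unfolding U_ideal_def
proof (induction f rule: cspan.induct)
  case cspan_zero thus ?case by (simp add: cspan.cspan_zero)
next
  case (cspan_step g f c)
  then obtain u r v where g: "g = fa_mul (fa_mul u r) v" "fin_supp u" "fin_supp v" "r \<in> U_rels" by auto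
  have "fa_mul x g = fa_mul (fa_mul (fa_mul x u) r) v" unfolding g by (simp add: fa_mul_assoc)
  hence g': "fa_mul x g \<in> {fa_mul (fa_mul u r) v |u r v. fin_supp u \<and> fin_supp v \<and> r \<in> U_rels}"
    using g assms(2) fin_supp_mul by blast
  have "fa_mul x (\<lambda>u. c * g u + f u) = (\<lambda>u. c * fa_mul x g u + fa_mul x f u)"
    using fa_mul_add_right[of x "\<lambda>u. c * g u" f] fa_mul_smult_right[of x c g]
    by (simp add: fa_add_def)
  thus ?case using cspan_step g' by (simp add: cspan.cspan_step)
qed

lemma cspan_mul_right:
  assumes "f \<in> U_ideal" "fin_supp x" shows "fa_mul f x \<in> U_ideal"
  using assms(1) unfolding U_ideal_def
proof (induction f rule: cspan.induct)
  case cspan_zero thus ?case by (simp add: cspan.cspan_zero)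
next
  case (cspan_step g f c)
  then obtain u r v where g: "g = fa_mul (fa_mul u r) v" "fin_supp u" "fin_supp v" "r \<in> U_rels" by auto
  have "fa_mul g x = fa_mul (fa_mul u r) (fa_mul v x)" unfolding g by (simp add: fa_mul_assoc)
  hence g': "fa_mul g x \<in> {fa_mul (fa_mul u r) v |u r v. fin_supp u \<and> fin_supp v \<and> r \<in> U_rels}"
    using g assms(2) fin_supp_mul by blast
  have "fa_mul (\<lambda>u. c * g u + f u) x = (\<lambda>u. c * fa_mul g x u + fa_mul f x u)"
    using fa_mul_add_left[of "\<lambda>u. c * g u" f x] fa_mul_smult_left[of c g x]
    by (simp add: fa_add_def)
  thus ?case using cspan_step g' by (simp add: cspan.cspan_step)
qed

definition Jr :: "fr \<Rightarrow> bool" where "Jr x \<longleftrightarrow> rep x \<in> U_ideal"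

lemma Jr_0[simp]: "Jr 0"
  unfolding Jr_def U_ideal_def by (simp add: zero_fr.rep_eq cspan.cspan_zero)
lemma Jr_add: "Jr x \<Longrightarrow> Jr y \<Longrightarrow> Jr (x + y)"
  unfolding Jr_def U_ideal_def by (simp add: plus_fr.rep_eq fa_add_def cspan_add)
lemma Jr_smul: "Jr x \<Longrightarrow> Jr (smul c x)"
  unfolding Jr_def U_ideal_def by (simp add: smul.rep_eq cspan_smult)
lemma Jr_neg: "Jr x \<Longrightarrow> Jr (- x)"
  using Jr_smul[of x "-1"] by (simp add: smul_neg_left)
lemma Jr_diff: "Jr x \<Longrightarrow> Jr y \<Longrightarrow> Jr (x - y)"
  by (metis diff_conv_add_uminus Jr_add Jr_neg)
lemma Jr_sum: "(\<And>a. a \<in> A \<Longrightarrow> Jr (f a)) \<Longrightarrow> Jr (sum f A)"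
  by (induction A rule: infinite_finite_induct) (auto simp: Jr_add)
lemma Jr_mult_left: "Jr x \<Longrightarrow> fs u \<Longrightarrow> Jr (u * x)"
  unfolding Jr_def fs_def by (simp add: times_fr.rep_eq cspan_mul_left)
lemma Jr_mult_right: "Jr x \<Longrightarrow> fs u \<Longrightarrow> Jr (x * u)"
  unfolding Jr_def fs_def by (simp add: times_fr.rep_eq cspan_mul_right)
lemma Jr_rel: "rep x \<in> U_rels \<Longrightarrow> Jr x"
  unfolding Jr_def U_ideal_def
proof (rule cspan_gen)
  assume "rep x \<in> U_rels"
  moreover have "rep x = fa_mul (fa_mul fa_one (rep x)) fa_one" by (simp add: fa_mul_one_left fa_mul_one_right)
  moreover have "fin_supp fa_one" by (simp add: fa_one_def fin_supp_mono)
  ultimately show "rep x \<in> {fa_mul (fa_mul u r) v |u r v. fin_supp u \<and> fin_supp v \<and> r \<in> U_rels}"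
    by (intro CollectI exI[of _ fa_one] exI[of _ "rep x"]) simp
qed


subsection \<open>The iterated elements\<close>

definition eps :: "idx \<Rightarrow> complex" where "eps a = (if a = I1 \<or> a = I2 then 1 else 0)"
definition op :: "idx \<Rightarrow> fr \<Rightarrow> fr" where "op a g = Z a * g - smul (eps a) (g * Z a)"

fun Pw :: "idx list \<Rightarrow> fr" where
  "Pw [] = 1"
| "Pw (a # v) = op a (Pw v)"

lemma op_0[simp]: "op a 0 = 0" unfolding op_def by simp
lemma op_add: "op a (x + y) = op a x + op a y" unfolding op_def by (simp add: algebra_simps)
lemma op_smul: "op a (smul c x) = smul c (op a x)" unfolding op_def by (simp add: mult.commute)
lemma op_sum: "op a (sum f A) = sum (\<lambda>i. op a (f i)) A"
  by (induction A rule: infinite_finite_induct) (auto simp: op_add)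
lemma fs_op[simp]: "fs g \<Longrightarrow> fs (op a g)" unfolding op_def by simp
lemma Jr_op: "Jr g \<Longrightarrow> Jr (op a g)"
  unfolding op_def by (intro Jr_diff Jr_smul Jr_mult_left Jr_mult_right) auto
lemma fs_Pw[simp]: "fs (Pw w)" by (induction w) auto

lemma Pw_last: "w \<noteq> [] \<Longrightarrow> last w \<in> {I1, I2} \<Longrightarrow> Pw w = 0"
proof (induction w)
  case Nil thus ?case by simp
next
  case (Cons a v)
  show ?case
  proof (cases "v = []")
    case True
    hence "eps a = 1" using Cons by (auto simp: eps_def)
    thus ?thesis using True by (simp add: op_def)
  next
    case False thus ?thesis using Cons by simp
  qed
qed

lemma rep_op: "rep (op a g) = (if a = I1 \<or> a = I2 then fa_comm (Zg a) (rep g) else fa_mul (Zg a) (rep g))"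
  unfolding op_def eps_def fa_comm_def
  by (auto simp: minus_fr.rep_eq times_fr.rep_eq Z.rep_eq smul.rep_eq zero_fr.rep_eq fa_diff_def)

lemma T_eq: "(Lop ^^ s) unitT = (\<lambda>w. if length w = s then rep (Pw w) else (\<lambda>_. 0))"
proof (induction s)
  case 0 thus ?case by (auto simp: unitT_def one_fr.rep_eq fun_eq_iff)
next
  case (Suc s)
  show ?case
  proof (rule ext)
    fix w :: "idx list"
    have e: "(Lop ^^ Suc s) unitT w = Lop (\<lambda>w. if length w = s then rep (Pw w) else (\<lambda>_. 0)) w"
      using Suc by simp
    have "Lop (\<lambda>w. if length w = s then rep (Pw w) else (\<lambda>_. 0)) w = (if length w = Suc s then rep (Pw w) else (\<lambda>_. 0))"
    proof (cases w)
      case Nil thus ?thesis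
        by (simp add: Lop_def tens_add_def ad_lt_def mu_lt_def)
    next
      case (Cons b v)
      thus ?thesis
        by (cases b) (auto simp: Lop_def tens_add_def ad_lt_def mu_lt_def rep_op fa_comm_def fa_diff_def)
    qed
    thus "(Lop ^^ Suc s) unitT w = (if length w = Suc s then rep (Pw w) else (\<lambda>_. 0))"
      using e by simp
  qed
qed


subsection \<open>Degree two elements\<close>

definition elem :: "(idx \<Rightarrow> idx \<Rightarrow> complex) \<Rightarrow> fr" where
  "elem k = (\<Sum>a\<in>UNIV. \<Sum>b\<in>UNIV. smul (k a b) (Z a * Z b))"

lemma elem_add: "elem k1 + elem k2 = elem (\<lambda>a b. k1 a b + k2 a b)"
  unfolding elem_def by (simp add: sum.distrib[symmetric] smul_add_left)

lemma elem_smul: "smul c (elem k) = elem (\<lambda>a b. c * k a b)"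
  unfolding elem_def by (simp add: smul_sum)

lemma elem_neg: "- elem k = elem (\<lambda>a b. - k a b)"
  unfolding elem_def by (simp add: smul_neg_left sum_negf)

lemma elem_diff: "elem k1 - elem k2 = elem (\<lambda>a b. k1 a b - k2 a b)"
  by (simp add: diff_conv_add_uminus elem_neg elem_add del: add_uminus_conv_diff)

lemma smul_if01: "smul (if P then 1 else 0) x = (if P then x else 0)" by simp

definition ind :: "idx \<Rightarrow> idx \<Rightarrow> idx \<Rightarrow> idx \<Rightarrow> complex" where
  "ind a b = (\<lambda>c d. if c = a \<and> d = b then 1 else 0)"

lemma elem_ind: "elem (ind a b) = Z a * Z b"
proof -
  have h: "\<And>c. (\<Sum>d\<in>UNIV. smul (ind a b c d) (Z c * Z d)) = (if c = a then Z a * Z b else 0)"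
    by (auto simp: ind_def smul_if01)
  show ?thesis unfolding elem_def by (simp add: h)
qed

definition comm :: "fr \<Rightarrow> fr \<Rightarrow> fr" where "comm x y = x * y - y * x"

lemma comm_elem: "comm (Z a) (Z b) = elem (\<lambda>c d. ind a b c d - ind b a c d)"
  unfolding comm_def by (simp add: elem_ind[symmetric] elem_diff)

lemma rep_comm: "rep (comm x y) = fa_comm (rep x) (rep y)"
  unfolding comm_def fa_comm_def by (simp add: minus_fr.rep_eq times_fr.rep_eq)

lemma Jr_R1: "Jr (comm (Z I1) (Z I2))"
  by (rule Jr_rel) (simp add: rep_comm Z.rep_eq U_rels_def)
lemma Jr_R2: "Jr (comm (Z I11) (Z I2))"
  by (rule Jr_rel) (simp add: rep_comm Z.rep_eq U_rels_def)
lemma Jr_R3: "Jr (comm (Z I1) (Z I22))"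
  by (rule Jr_rel) (simp add: rep_comm Z.rep_eq U_rels_def)
lemma Jr_R4: "Jr (comm (Z I11) (Z I22) + comm (Z I11) (Z I12))"
  by (rule Jr_rel) (simp add: rep_comm Z.rep_eq U_rels_def plus_fr.rep_eq)
lemma Jr_R5: "Jr (comm (Z I11) (Z I22) - comm (Z I22) (Z I12))"
  by (rule Jr_rel) (simp add: rep_comm Z.rep_eq U_rels_def minus_fr.rep_eq)
lemma Jr_R6: "Jr (comm (Z I11) (Z I22) + comm (Z I1 - Z I2) (Z I12))"
  by (rule Jr_rel) (simp add: rep_comm Z.rep_eq U_rels_def plus_fr.rep_eq minus_fr.rep_eq)

lemma comm_diff_left: "comm (x - y) z = comm x z - comm y z"
  unfolding comm_def by (simp add: algebra_simps)


lemma W_Jr: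
  assumes "goodpt p" shows "Jr (elem (\<lambda>a b. wedge a b p))"
proof -
  obtain x y where p: "p = (x, y)" by (cases p)
  have nz: "x \<noteq> 0" "1 - x \<noteq> 0" "y \<noteq> 0" "1 - y \<noteq> 0" "1 - x * y \<noteq> 0"
    using assms by (auto simp: p goodpt_def)
  define c1 where "c1 = 1 / (x * y)"
  define c2 where "c2 = 1 / ((1 - x) * y)"
  define c3 where "c3 = 1 / (x * (1 - y))"
  define c4 where "c4 = x / ((1 - x) * (1 - x * y))"
  define c5 where "c5 = y / ((1 - y) * (1 - x * y))"
  define c6 where "c6 = 1 / (1 - x * y)"
  define R where "R = smul c1 (comm (Z I1) (Z I2)) + smul c2 (comm (Z I11) (Z I2))
     + smul c3 (comm (Z I1) (Z I22)) + smul c4 (comm (Z I11) (Z I22) + comm (Z I11) (Z I12))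
     + smul c5 (comm (Z I11) (Z I22) - comm (Z I22) (Z I12))
     + smul c6 (comm (Z I11) (Z I22) + comm (Z I1 - Z I2) (Z I12))"
  have JR: "Jr R" unfolding R_def
    by (rule Jr_add[OF Jr_add[OF Jr_add[OF Jr_add[OF Jr_add[OF Jr_smul[OF Jr_R1] Jr_smul[OF Jr_R2]]
          Jr_smul[OF Jr_R3]] Jr_smul[OF Jr_R4]] Jr_smul[OF Jr_R5]] Jr_smul[OF Jr_R6]])
  have "R = elem (\<lambda>c d. c1 * (ind I1 I2 c d - ind I2 I1 c d) + c2 * (ind I11 I2 c d - ind I2 I11 c d)
     + c3 * (ind I1 I22 c d - ind I22 I1 c d)
     + c4 * ((ind I11 I22 c d - ind I22 I11 c d) + (ind I11 I12 c d - ind I12 I11 c d))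
     + c5 * ((ind I11 I22 c d - ind I22 I11 c d) - (ind I22 I12 c d - ind I12 I22 c d))
     + c6 * ((ind I11 I22 c d - ind I22 I11 c d) + ((ind I1 I12 c d - ind I12 I1 c d) - (ind I2 I12 c d - ind I12 I2 c d))))"
    unfolding R_def comm_diff_left comm_elem elem_add elem_diff elem_smul by simp
  also have "\<dots> = elem (\<lambda>a b. wedge a b p)"
  proof (rule arg_cong[where f = elem], rule ext, rule ext)
    fix c d :: idx
    have kk: "x/(a*c) + y/(b*c) + 1/c = 1/(a*b)"
      if ne: "a \<noteq> 0" "b \<noteq> 0" "c \<noteq> 0" and eq: "a = 1 - x" "b = 1 - y" "c = 1 - x * y" for a b c :: complex
    proof -
      have "x/(a*c) + y/(b*c) + 1/c = (x*b + y*a + a*b)/(a*b*c)" using ne by (simp add: field_simps)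
      also have "x*b + y*a + a*b = c" unfolding eq by (simp add: algebra_simps)
      also have "c/(a*b*c) = 1/(a*b)" using ne by simp
      finally show ?thesis .
    qed
    have k: "c4 + c5 + c6 = 1 / ((1 - x) * (1 - y))"
      unfolding c4_def c5_def c6_def using kk[OF nz(2) nz(4) nz(5) refl refl refl] by simp
    show "c1 * (ind I1 I2 c d - ind I2 I1 c d) + c2 * (ind I11 I2 c d - ind I2 I11 c d)
     + c3 * (ind I1 I22 c d - ind I22 I1 c d)
     + c4 * ((ind I11 I22 c d - ind I22 I11 c d) + (ind I11 I12 c d - ind I12 I11 c d))
     + c5 * ((ind I11 I22 c d - ind I22 I11 c d) - (ind I22 I12 c d - ind I12 I22 c d))
     + c6 * ((ind I11 I22 c d - ind I22 I11 c d) + ((ind I1 I12 c d - ind I12 I1 c d) - (ind I2 I12 c d - ind I12 I2 c d)))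
     = wedge c d p"
    proof (cases "(c = I11 \<and> d = I22) \<or> (c = I22 \<and> d = I11)")
      case True
      have k2: "c6 = 1 / ((1 - x) * (1 - y)) - c4 - c5" using k by (simp add: algebra_simps)
      from True show ?thesis
        by (auto simp: ind_def wedge_def coef_def p k2 algebra_simps)
    next
      case False thus ?thesis using nz
        by (cases c; cases d; simp add: ind_def wedge_def coef_def p c1_def c2_def c3_def c4_def c5_def c6_def field_simps)
    qed
  qed
  finally show ?thesis using JR by simp
qed


lemma wedge_anti: "wedge b a p = - wedge a b p"
  unfolding wedge_def by (simp add: algebra_simps)

lemma Wp_Jr: "Jr (elem (\<lambda>c d. wedge d c p * eps d * eps c))"
proof -
  have e: "smul (- wedge I1 I2 p) (comm (Z I1) (Z I2)) = elem (\<lambda>c d. wedge d c p * eps d * eps c)"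
    unfolding comm_elem elem_smul
  proof (rule arg_cong[where f = elem], rule ext, rule ext)
    fix c d :: idx
    show "- wedge I1 I2 p * (ind I1 I2 c d - ind I2 I1 c d) = wedge d c p * eps d * eps c"
      by (cases c; cases d; simp add: ind_def eps_def wedge_anti[of I1 I2] wedge_def)
  qed
  show ?thesis unfolding e[symmetric] by (rule Jr_smul[OF Jr_R1])
qed

lemma op_op: "op a (op b G) = Z a * Z b * G - smul (eps b) (Z a * G * Z b) - smul (eps a) (Z b * G * Z a) + smul (eps a * eps b) (G * Z b * Z a)"
  unfolding op_def
  apply (simp only: right_diff_distrib left_diff_distrib smul_mult_left smul_mult_right smul_diff smul_smul mult.assoc)
  by (simp add: diff_diff_eq2 diff_add_eq mult.commute)

lemma key:
  assumes "goodpt p" "fs G"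
  shows "Jr (\<Sum>a\<in>UNIV. \<Sum>b\<in>UNIV. smul (wedge a b p) (op a (op b G)))"
proof -
  define w where "w = (\<lambda>a b. wedge a b p)"
  define A where "A = (\<lambda>a b. smul (w a b) (Z a * Z b) * G)"
  define B where "B = (\<lambda>a b. smul (w a b * eps b) (Z a * G * Z b))"
  define C where "C = (\<lambda>a b. smul (w a b * eps a) (Z b * G * Z a))"
  define D where "D = (\<lambda>a b. G * smul (w a b * eps a * eps b) (Z b * Z a))"
  have exp: "smul (w a b) (op a (op b G)) = A a b - B a b - C a b + D a b" for a b
    unfolding A_def B_def C_def D_def op_op by (simp add: mult.assoc)
  have "(\<Sum>a\<in>UNIV. \<Sum>b\<in>UNIV. smul (w a b) (op a (op b G)))
      = (\<Sum>a\<in>UNIV. \<Sum>b\<in>UNIV. A a b) - (\<Sum>a\<in>UNIV. \<Sum>b\<in>UNIV. B a b)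
        - (\<Sum>a\<in>UNIV. \<Sum>b\<in>UNIV. C a b) + (\<Sum>a\<in>UNIV. \<Sum>b\<in>UNIV. D a b)"
    unfolding exp by (simp add: sum.distrib sum_subtractf)
  also have "(\<Sum>a\<in>UNIV. \<Sum>b\<in>UNIV. C a b) = - (\<Sum>a\<in>UNIV. \<Sum>b\<in>UNIV. B a b)"
  proof -
    have "(\<Sum>a\<in>UNIV. \<Sum>b\<in>UNIV. C a b) = (\<Sum>b\<in>UNIV. \<Sum>a\<in>UNIV. C a b)" by (rule sum.swap)
    also have "\<dots> = (\<Sum>b\<in>UNIV. \<Sum>a\<in>UNIV. - B b a)"
    proof -
      have "C a b = - B b a" for a b
        unfolding B_def C_def w_def using wedge_anti[of b a p] by (simp add: smul_neg_left)
      thus ?thesis by simp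
    qed
    finally show ?thesis by (simp add: sum_negf)
  qed
  also have "(\<Sum>a\<in>UNIV. \<Sum>b\<in>UNIV. A a b) = elem w * G"
    unfolding A_def elem_def by (simp add: sum_distrib_right)
  also have "(\<Sum>a\<in>UNIV. \<Sum>b\<in>UNIV. D a b) = G * elem (\<lambda>c d. w d c * eps d * eps c)"
  proof -
    have "(\<Sum>a\<in>UNIV. \<Sum>b\<in>UNIV. D a b) = (\<Sum>b\<in>UNIV. \<Sum>a\<in>UNIV. D a b)" by (rule sum.swap)
    thus ?thesis unfolding D_def elem_def by (simp add: sum_distrib_left)
  qed
  finally have eq: "(\<Sum>a\<in>UNIV. \<Sum>b\<in>UNIV. smul (w a b) (op a (op b G))) =
      elem w * G + G * elem (\<lambda>c d. w d c * eps d * eps c)" by simp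
  have "Jr (elem w * G + G * elem (\<lambda>c d. w d c * eps d * eps c))"
    unfolding w_def using W_Jr[OF assms(1)] Wp_Jr assms(2) by (intro Jr_add Jr_mult_left Jr_mult_right)
  thus ?thesis using eq unfolding w_def by simp
qed


subsection \<open>The Chen defect lies in the ideal\<close>

lemma fin_len: "finite {I::idx list. length I = n}"
  using finite_lists_length_eq[of "UNIV :: idx set" n] by simp

lemma sum_len_Suc:
  "(\<Sum>I\<in>{I::idx list. length I = Suc n}. f I) = (\<Sum>a\<in>UNIV. \<Sum>I\<in>{I. length I = n}. f (a # I))"
proof -
  have e: "{I::idx list. length I = Suc n} = (\<lambda>(a, I). a # I) ` (UNIV \<times> {I. length I = n})"
  proof (rule set_eqI)
    fix I :: "idx list"
    show "I \<in> {I. length I = Suc n} \<longleftrightarrow> I \<in> (\<lambda>(a, I). a # I) ` (UNIV \<times> {I. length I = n})"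
      by (cases I) auto
  qed
  have i: "inj_on (\<lambda>(a, I). a # I) (UNIV \<times> {I::idx list. length I = n})"
    by (auto simp: inj_on_def)
  show ?thesis unfolding e
    by (subst sum.reindex[OF i]) (simp add: sum.cartesian_product case_prod_unfold)
qed

lemma mform_cons:
  assumes "1 \<le> l"
  shows "mform (a # I) (Suc l) x j = coef a (x 0) (j 0) * mform I l (\<lambda>k. x (Suc k)) (\<lambda>k. j (Suc k))"
proof -
  obtain m where l: "l = Suc m" using assms by (cases l) auto
  have p1: "(\<Prod>k<l. coef ((a # I) ! k) (x k) (j k)) = coef a (x 0) (j 0) * (\<Prod>k<m. coef (I ! k) (x (Suc k)) (j (Suc k)))"
    unfolding l by (subst prod.lessThan_Suc_shift) simp
  have p2: "(\<Prod>k\<in>{Suc l..<length I}. coef ((a # I) ! Suc k) (x k) (j k)) =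
            (\<Prod>k\<in>{l..<length I - 1}. coef (I ! Suc k) (x (Suc k)) (j (Suc k)))"
  proof (cases "length I")
    case 0 thus ?thesis by simp
  next
    case (Suc n)
    have "(\<Prod>k\<in>{Suc l..<length I}. coef ((a # I) ! Suc k) (x k) (j k)) = (\<Prod>k\<in>{Suc l..<Suc n}. coef (I ! k) (x k) (j k))"
      using Suc by (simp only: nth_Cons_Suc)
    also have "\<dots> = (\<Prod>k\<in>{l..<n}. coef (I ! Suc k) (x (Suc k)) (j (Suc k)))"
      by (rule prod.shift_bounds_Suc_ivl)
    finally show ?thesis using Suc by (simp only: diff_Suc_1)
  qed
  show ?thesis unfolding mform_def using p1 p2 by (simp add: l)
qed

lemma mform_one:
  "mform (a # b # q) 1 x j = wedge a b (x 0) * (\<Prod>k\<in>{1..<Suc (length q)}. coef (q ! (k - 1)) (x k) (j k))"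
proof -
  have "(\<Prod>k\<in>{1..<Suc (length q)}. coef ((a # b # q) ! Suc k) (x k) (j k)) =
        (\<Prod>k\<in>{1..<Suc (length q)}. coef (q ! (k - 1)) (x k) (j k))"
    by (rule prod.cong) (auto simp: nth_Cons')
  thus ?thesis unfolding mform_def by simp
qed

lemma sum3_swap: "(\<Sum>a\<in>A. \<Sum>b\<in>B. \<Sum>q\<in>Q. F a b q) = (\<Sum>q\<in>Q. \<Sum>a\<in>A. \<Sum>b\<in>B. F a b q)"
proof -
  have "(\<Sum>a\<in>A. \<Sum>b\<in>B. \<Sum>q\<in>Q. F a b q) = (\<Sum>a\<in>A. \<Sum>q\<in>Q. \<Sum>b\<in>B. F a b q)"
    by (rule sum.cong[OF refl], rule sum.swap)
  also have "\<dots> = (\<Sum>q\<in>Q. \<Sum>a\<in>A. \<Sum>b\<in>B. F a b q)" by (rule sum.swap)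
  finally show ?thesis .
qed

lemma defect:
  "1 \<le> l \<Longrightarrow> l < s \<Longrightarrow> (\<forall>k. goodpt (x k)) \<Longrightarrow>
   Jr (\<Sum>I\<in>{I. length I = s}. smul (mform I l x j) (Pw I))"
proof (induction l arbitrary: s x j)
  case 0 thus ?case by simp
next
  case (Suc l)
  show ?case
  proof (cases "l = 0")
    case True
    define n where "n = s - 2"
    have s: "s = Suc (Suc n)" using Suc.prems True unfolding n_def by linarith
    define cq where "cq = (\<lambda>q::idx list. \<Prod>k\<in>{1..<Suc (length q)}. coef (q ! (k - 1)) (x k) (j k))"
    have mo: "mform (a # b # q) (Suc 0) x j = cq q * wedge a b (x 0)" for a b q
      using mform_one[of a b q x j] unfolding cq_def by (simp add: mult.commute)
    have "(\<Sum>I\<in>{I. length I = s}. smul (mform I (Suc l) x j) (Pw I)) =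
          (\<Sum>a\<in>UNIV. \<Sum>b\<in>UNIV. \<Sum>q\<in>{I. length I = n}. smul (cq q) (smul (wedge a b (x 0)) (op a (op b (Pw q)))))"
      unfolding s True by (simp add: sum_len_Suc mo)
    also have "\<dots> = (\<Sum>q\<in>{I. length I = n}. smul (cq q) (\<Sum>a\<in>UNIV. \<Sum>b\<in>UNIV. smul (wedge a b (x 0)) (op a (op b (Pw q)))))"
      by (subst sum3_swap) (simp add: smul_sum)
    finally show ?thesis using key Suc.prems(3)
      by (simp add: Jr_sum Jr_smul)
  next
    case False
    obtain s' where s: "s = Suc s'" using Suc.prems by (cases s) auto
    have l1: "1 \<le> l" "l < s'" using False Suc.prems s by auto
    have "(\<Sum>I\<in>{I. length I = s}. smul (mform I (Suc l) x j) (Pw I)) =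
          (\<Sum>a\<in>UNIV. smul (coef a (x 0) (j 0)) (op a (\<Sum>I\<in>{I. length I = s'}. smul (mform I l (\<lambda>k. x (Suc k)) (\<lambda>k. j (Suc k))) (Pw I))))"
      unfolding s by (simp add: sum_len_Suc mform_cons[OF l1(1)] op_sum op_smul smul_sum)
    moreover have "Jr (\<Sum>I\<in>{I. length I = s'}. smul (mform I l (\<lambda>k. x (Suc k)) (\<lambda>k. j (Suc k))) (Pw I))"
      using Suc.IH[OF l1] Suc.prems(3) by simp
    ultimately show ?thesis by (simp add: Jr_sum Jr_smul Jr_op)
  qed
qed


subsection \<open>Linear algebra: splitting off the constraints\<close>

definition Good :: "idx list set \<Rightarrow> (idx list \<Rightarrow> complex) set \<Rightarrow> (idx list \<Rightarrow> complex) \<Rightarrow> bool" where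
  "Good S \<Phi> b \<longleftrightarrow> (\<forall>w. w \<notin> S \<longrightarrow> b w = 0) \<and> (\<forall>m\<in>\<Phi>. (\<Sum>I\<in>S. m I * b I) = 0)"

definition Gen :: "idx list set \<Rightarrow> (idx list \<Rightarrow> complex) set \<Rightarrow> tens set" where
  "Gen S \<Phi> = {(\<lambda>w u. b w * F u) | b F. Good S \<Phi> b \<and> fin_supp F}"

lemma tspan_mono: "t \<in> tspan G \<Longrightarrow> G \<subseteq> H \<Longrightarrow> t \<in> tspan H"
  by (induction rule: tspan.induct) (auto intro: tspan.intros)

lemma Good_insert: "finite S \<Longrightarrow> a \<notin> S \<Longrightarrow> Good S \<Phi> b \<Longrightarrow> Good (insert a S) \<Phi> b"
  unfolding Good_def by auto

lemma Gen_insert: "finite S \<Longrightarrow> a \<notin> S \<Longrightarrow> Gen S \<Phi> \<subseteq> Gen (insert a S) \<Phi>"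
  unfolding Gen_def using Good_insert by blast

lemma cspan_lincomb:
  "finite A \<Longrightarrow> (\<forall>i\<in>A. f i \<in> cspan G) \<Longrightarrow> (\<lambda>u. \<Sum>i\<in>A. c i * f i u) \<in> cspan G"
proof (induction A rule: finite_induct)
  case empty thus ?case by (simp add: cspan.cspan_zero)
next
  case (insert i A)
  hence "(\<lambda>u. c i * f i u + (\<Sum>i\<in>A. c i * f i u)) \<in> cspan G"
    by (intro cspan_add cspan_smult) auto
  thus ?case using insert by simp
qed

lemma tspan_map:
  assumes "t \<in> tspan (Gen S' \<Phi>')" "finite S'" "a \<notin> S'" "\<Phi>' = (\<lambda>m I. m I - n I * m a) ` \<Phi>"
  shows "(\<lambda>w u. if w = a then - (\<Sum>I\<in>S'. n I * t I u) else t w u) \<in> tspan (Gen (insert a S') \<Phi>)"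
  using assms(1)
proof (induction rule: tspan.induct)
  case tspan_zero
  have eq: "(\<lambda>w u. if w = a then - (\<Sum>I\<in>S'. n I * 0) else 0) = (\<lambda>_ _. (0::complex))" by (simp add: fun_eq_iff)
  show ?case by (subst eq) (rule tspan.tspan_zero)
next
  case (tspan_step g t c)
  then obtain b F where g: "g = (\<lambda>w u. b w * F u)" "Good S' \<Phi>' b" "fin_supp F"
    unfolding Gen_def by auto
  define Lb where "Lb = (\<lambda>w. if w = a then - (\<Sum>I\<in>S'. n I * b I) else b w)"
  have "Good (insert a S') \<Phi> Lb"
    unfolding Good_def
  proof (intro conjI allI impI ballI)
    fix w assume "w \<notin> insert a S'"
    thus "Lb w = 0" using g(2) unfolding Lb_def Good_def by auto
  next
    fix m assume m: "m \<in> \<Phi>"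
    hence "(\<lambda>I. m I - n I * m a) \<in> \<Phi>'" using assms(4) by auto
    hence z: "(\<Sum>I\<in>S'. (m I - n I * m a) * b I) = 0" using g(2) unfolding Good_def by auto
    have "(\<Sum>I\<in>insert a S'. m I * Lb I) = m a * Lb a + (\<Sum>I\<in>S'. m I * Lb I)"
      using assms(2,3) by simp
    also have "(\<Sum>I\<in>S'. m I * Lb I) = (\<Sum>I\<in>S'. m I * b I)"
      using assms(3) unfolding Lb_def by (intro sum.cong) auto
    also have "m a * Lb a + (\<Sum>I\<in>S'. m I * b I) = (\<Sum>I\<in>S'. (m I - n I * m a) * b I)"
      unfolding Lb_def by (simp add: sum_subtractf sum_distrib_left algebra_simps)
    finally show "(\<Sum>I\<in>insert a S'. m I * Lb I) = 0" using z by simp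
  qed
  hence g': "(\<lambda>w u. Lb w * F u) \<in> Gen (insert a S') \<Phi>" using g(3) unfolding Gen_def by auto
  have "(\<lambda>w u. if w = a then - (\<Sum>I\<in>S'. n I * (c * g I u + t I u)) else c * g w u + t w u) =
        (\<lambda>w u. c * (Lb w * F u) + (if w = a then - (\<Sum>I\<in>S'. n I * t I u) else t w u))"
    unfolding g(1) Lb_def
    by (auto simp: fun_eq_iff sum.distrib sum_distrib_left sum_distrib_right algebra_simps)
  thus ?case using tspan.tspan_step[OF g' tspan_step.IH, of c] by simp
qed

lemma LA:
  assumes "finite S"
  shows "(\<forall>w. w \<notin> S \<longrightarrow> T w = (\<lambda>_. 0)) \<Longrightarrow> (\<forall>w. fin_supp (T w)) \<Longrightarrow>
    (\<forall>m\<in>\<Phi>. (\<lambda>u. \<Sum>I\<in>S. m I * T I u) \<in> U_ideal) \<Longrightarrow>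
    \<exists>y z. y \<in> tspan (Gen S \<Phi>) \<and> (\<forall>w. w \<notin> S \<longrightarrow> z w = (\<lambda>_. 0)) \<and> (\<forall>w. z w \<in> U_ideal)
        \<and> T = (\<lambda>w u. y w u + z w u)"
  using assms
proof (induction S arbitrary: T \<Phi> rule: finite_induct)
  case empty
  have "T = (\<lambda>w u. (\<lambda>_ _. 0) w u + (\<lambda>_ _. 0) w u)" using empty.prems(1) by auto
  moreover have "(\<lambda>_. 0) \<in> U_ideal" unfolding U_ideal_def by (rule cspan.cspan_zero)
  ultimately show ?case by (intro exI[of _ "\<lambda>_ _. 0"]) (auto intro: tspan.tspan_zero)
next
  case (insert a S')
  define T' where "T' = (\<lambda>w. if w \<in> S' then T w else (\<lambda>_. 0))"
  have T'1: "\<forall>w. w \<notin> S' \<longrightarrow> T' w = (\<lambda>_. 0)" unfolding T'_def by auto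
  have T'2: "\<forall>w. fin_supp (T' w)" using insert.prems(2) unfolding T'_def by auto
  have T'S: "\<And>f. (\<Sum>I\<in>S'. f I * T' I u) = (\<Sum>I\<in>S'. f I * T I u)" for u
    unfolding T'_def by (rule sum.cong) auto
  have T'w: "w \<noteq> a \<Longrightarrow> T' w = T w" for w
    using insert.prems(1) unfolding T'_def by auto
  have Z0: "(\<lambda>_. 0) \<in> U_ideal" unfolding U_ideal_def by (rule cspan.cspan_zero)
  show ?case
  proof (cases "\<forall>m\<in>\<Phi>. m a = 0")
    case True
    have "\<forall>m\<in>\<Phi>. (\<lambda>u. \<Sum>I\<in>S'. m I * T' I u) \<in> U_ideal"
    proof
      fix m assume m: "m \<in> \<Phi>"
      have "(\<lambda>u. \<Sum>I\<in>S'. m I * T' I u) = (\<lambda>u. \<Sum>I\<in>insert a S'. m I * T I u)"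
      proof -
        have "m a = 0" using True m by blast
        thus ?thesis using insert.hyps by (simp add: T'S)
      qed
      thus "(\<lambda>u. \<Sum>I\<in>S'. m I * T' I u) \<in> U_ideal" using insert.prems(3) m by simp
    qed
    then obtain y' z' where yz: "y' \<in> tspan (Gen S' \<Phi>)" "\<forall>w. w \<notin> S' \<longrightarrow> z' w = (\<lambda>_. 0)"
       "\<forall>w. z' w \<in> U_ideal" "T' = (\<lambda>w u. y' w u + z' w u)"
      using insert.IH[OF T'1 T'2] by blast
    define e where "e = (\<lambda>w::idx list. if w = a then (1::complex) else 0)"
    have "Good (insert a S') \<Phi> e"
      unfolding Good_def e_def using True insert.hyps by (auto simp: if_distrib cong: if_cong)
    hence g: "(\<lambda>w u. e w * T a u) \<in> Gen (insert a S') \<Phi>"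
      using insert.prems(2) unfolding Gen_def by auto
    have y'': "y' \<in> tspan (Gen (insert a S') \<Phi>)"
      using tspan_mono[OF yz(1) Gen_insert[OF insert.hyps]] .
    define y where "y = (\<lambda>w u. 1 * (e w * T a u) + y' w u)"
    have "y \<in> tspan (Gen (insert a S') \<Phi>)"
      unfolding y_def by (rule tspan.tspan_step[OF g y''])
    moreover have "T = (\<lambda>w u. y w u + z' w u)"
    proof (intro ext)
      fix w u
      show "T w u = y w u + z' w u"
      proof (cases "w = a")
        case True
        have "y' a u + z' a u = 0" using fun_cong[OF fun_cong[OF yz(4), of a], of u] insert.hyps
          unfolding T'_def by simp
        thus ?thesis using True unfolding y_def e_def by (simp add: algebra_simps)
      next
        case False
        thus ?thesis using fun_cong[OF fun_cong[OF yz(4), of w], of u] T'w[OF False]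
          unfolding y_def e_def by simp
      qed
    qed
    ultimately show ?thesis using yz(2,3) by blast
  next
    case False
    then obtain m0 where m0: "m0 \<in> \<Phi>" "m0 a \<noteq> 0" by auto
    define n where "n = (\<lambda>I. m0 I / m0 a)"
    define \<alpha> where "\<alpha> = (\<lambda>u. \<Sum>I\<in>insert a S'. n I * T I u)"
    have ae: "\<alpha> = (\<lambda>u. (1 / m0 a) * (\<Sum>I\<in>insert a S'. m0 I * T I u))"
      unfolding \<alpha>_def n_def by (simp add: sum_distrib_left)
    have h: "(\<lambda>u. \<Sum>I\<in>insert a S'. m0 I * T I u) \<in> U_ideal" using insert.prems(3) m0(1) by blast
    have \<alpha>J: "\<alpha> \<in> U_ideal" unfolding ae using h unfolding U_ideal_def by (rule cspan_smult)
    have \<alpha>a: "\<alpha> u = T a u + (\<Sum>I\<in>S'. n I * T I u)" for u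
      unfolding \<alpha>_def n_def using insert.hyps m0(2) by simp
    define \<Phi>' where "\<Phi>' = (\<lambda>m I. m I - n I * m a) ` \<Phi>"
    have "\<forall>m'\<in>\<Phi>'. (\<lambda>u. \<Sum>I\<in>S'. m' I * T' I u) \<in> U_ideal"
    proof
      fix m' assume "m' \<in> \<Phi>'"
      then obtain m where m: "m \<in> \<Phi>" "m' = (\<lambda>I. m I - n I * m a)" unfolding \<Phi>'_def by auto
      have "(\<lambda>u. \<Sum>I\<in>S'. m' I * T' I u) = (\<lambda>u. (\<Sum>I\<in>insert a S'. m I * T I u) + (- m a) * \<alpha> u)"
      proof
        fix u
        show "(\<Sum>I\<in>S'. m' I * T' I u) = (\<Sum>I\<in>insert a S'. m I * T I u) + (- m a) * \<alpha> u"
          unfolding T'S m(2) \<alpha>a using insert.hyps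
          by (simp add: sum_subtractf sum_distrib_left sum_negf algebra_simps)
      qed
      moreover have "(\<lambda>u. (\<Sum>I\<in>insert a S'. m I * T I u) + (- m a) * \<alpha> u) \<in> U_ideal"
        using insert.prems(3) m(1) \<alpha>J unfolding U_ideal_def
        by (intro cspan_add cspan_smult) auto
      ultimately show "(\<lambda>u. \<Sum>I\<in>S'. m' I * T' I u) \<in> U_ideal" by simp
    qed
    then obtain y' z' where yz: "y' \<in> tspan (Gen S' \<Phi>')" "\<forall>w. w \<notin> S' \<longrightarrow> z' w = (\<lambda>_. 0)"
       "\<forall>w. z' w \<in> U_ideal" "T' = (\<lambda>w u. y' w u + z' w u)"
      using insert.IH[OF T'1 T'2] by blast
    define y where "y = (\<lambda>w u. if w = a then - (\<Sum>I\<in>S'. n I * y' I u) else y' w u)"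
    define z where "z = (\<lambda>w. if w = a then (\<lambda>u. \<alpha> u + (-1) * (\<Sum>I\<in>S'. n I * z' I u)) else z' w)"
    have "y \<in> tspan (Gen (insert a S') \<Phi>)"
      unfolding y_def using tspan_map[OF yz(1) insert.hyps(1,2) \<Phi>'_def] .
    moreover have "\<forall>w. w \<notin> insert a S' \<longrightarrow> z w = (\<lambda>_. 0)" using yz(2) unfolding z_def by auto
    moreover have "\<forall>w. z w \<in> U_ideal"
    proof
      fix w
      have "(\<lambda>u. \<Sum>I\<in>S'. n I * z' I u) \<in> U_ideal"
        using yz(3) insert.hyps(1) unfolding U_ideal_def by (intro cspan_lincomb) auto
      hence "(\<lambda>u. \<alpha> u + (-1) * (\<Sum>I\<in>S'. n I * z' I u)) \<in> U_ideal"
        using \<alpha>J unfolding U_ideal_def by (intro cspan_add cspan_smult)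
      thus "z w \<in> U_ideal" using yz(3) unfolding z_def by auto
    qed
    moreover have "T = (\<lambda>w u. y w u + z w u)"
    proof (intro ext)
      fix w u
      show "T w u = y w u + z w u"
      proof (cases "w = a")
        case True
        have "(\<Sum>I\<in>S'. n I * y' I u) + (\<Sum>I\<in>S'. n I * z' I u) = (\<Sum>I\<in>S'. n I * T I u)"
          unfolding sum.distrib[symmetric] distrib_left[symmetric]
          using T'S yz(4) by (simp add: fun_eq_iff)
        thus ?thesis using True \<alpha>a[of u] unfolding y_def z_def by (simp add: algebra_simps)
      next
        case False
        thus ?thesis using fun_cong[OF fun_cong[OF yz(4), of w], of u] T'w[OF False]
          unfolding y_def z_def by simp
      qed
    qed
    ultimately show ?thesis by blast
  qed
qed


lemma sum_indicator_mult:
  assumes "finite S"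
  shows "(\<Sum>I\<in>S. (if I = w then 1 else 0) * f I) = (if w \<in> S then f w else (0::complex))"
proof -
  have "(\<Sum>I\<in>S. (if I = w then 1 else 0) * f I) = (\<Sum>I\<in>S. if I = w then f I else 0)"
    by (rule sum.cong) auto
  thus ?thesis using assms by (simp add: sum.delta')
qed

theorem proposition6p2:
  fixes s :: nat
  shows "in_B0_U ((Lop ^^ s) unitT)"
proof -
  define S where "S = {I::idx list. length I = s}"
  define T where "T = (Lop ^^ s) unitT"
  have Teq: "T = (\<lambda>w. if length w = s then rep (Pw w) else (\<lambda>_. 0))" using T_eq T_def by simp
  define \<Phi> where "\<Phi> = {(\<lambda>I. mform I l x j) | l x j. 1 \<le> l \<and> l < s \<and> (\<forall>k. goodpt (x k))}
     \<union> {(\<lambda>I. if I = w then 1 else 0) | w. w \<noteq> [] \<and> last w \<in> {I1, I2}}"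
  have fS: "finite S" using fin_len S_def by simp
  have c1: "\<forall>w. w \<notin> S \<longrightarrow> T w = (\<lambda>_. 0)" unfolding Teq S_def by auto
  have c2: "\<forall>w. fin_supp (T w)" unfolding Teq using fs_Pw unfolding fs_def by auto
  have Z0: "(\<lambda>_. 0) \<in> U_ideal" unfolding U_ideal_def by (rule cspan.cspan_zero)
  have c3: "\<forall>m\<in>\<Phi>. (\<lambda>u. \<Sum>I\<in>S. m I * T I u) \<in> U_ideal"
  proof
    fix m assume "m \<in> \<Phi>"
    then consider (ch) l x j where "m = (\<lambda>I. mform I l x j)" "1 \<le> l" "l < s" "\<forall>k::nat. goodpt (x k)"
      | (ls) w where "m = (\<lambda>I. if I = w then 1 else 0)" "w \<noteq> []" "last w \<in> {I1, I2}"
      unfolding \<Phi>_def by blast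
    thus "(\<lambda>u. \<Sum>I\<in>S. m I * T I u) \<in> U_ideal"
    proof cases
      case ch
      have "Jr (\<Sum>I\<in>S. smul (mform I l x j) (Pw I))" using defect[OF ch(2,3,4)] S_def by simp
      moreover have "rep (\<Sum>I\<in>S. smul (mform I l x j) (Pw I)) = (\<lambda>u. \<Sum>I\<in>S. m I * T I u)"
        unfolding rep_sum smul.rep_eq ch(1) Teq S_def by simp
      ultimately show ?thesis unfolding Jr_def by simp
    next
      case ls
      have "(\<lambda>u. \<Sum>I\<in>S. m I * T I u) = (\<lambda>_. 0)"
        unfolding ls(1) sum_indicator_mult[OF fS]
        using Pw_last[OF ls(2,3)] by (auto simp: Teq zero_fr.rep_eq)
      thus ?thesis using Z0 by simp
    qed
  qed
  obtain y z where yz: "y \<in> tspan (Gen S \<Phi>)" "\<forall>w. w \<notin> S \<longrightarrow> z w = (\<lambda>_. 0)"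
       "\<forall>w. z w \<in> U_ideal" "T = (\<lambda>w u. y w u + z w u)"
    using LA[OF fS c1 c2 c3] by blast
  have GB: "b \<in> chenB0" if g: "Good S \<Phi> b" for b
  proof -
    have supp: "b w = 0" if "w \<notin> S" for w using g that unfolding Good_def by auto
    have "homogeneous b s" unfolding homogeneous_def using supp S_def by auto
    moreover have "chen b s" unfolding chen_def
    proof (intro allI impI)
      fix l :: nat and x :: "nat \<Rightarrow> complex \<times> complex" and j :: "nat \<Rightarrow> bool"
      assume a: "1 \<le> l \<and> l < s" "\<forall>k. goodpt (x k)"
      hence "(\<lambda>I. mform I l x j) \<in> \<Phi>" unfolding \<Phi>_def by blast
      hence "(\<Sum>I\<in>S. mform I l x j * b I) = 0" using g unfolding Good_def
        using bspec[of \<Phi> "\<lambda>m. (\<Sum>I\<in>S. m I * b I) = 0" "\<lambda>I. mform I l x j"] by simp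
      thus "(\<Sum>I\<in>{I. length I = s}. b I * mform I l x j) = 0" unfolding S_def by (simp add: mult.commute)
    qed
    ultimately have "b \<in> chenB" unfolding chenB_def by (intro cspan_gen) blast
    moreover have "last w \<notin> {I1, I2}" if "b w \<noteq> 0" "w \<noteq> []" for w
    proof
      assume l: "last w \<in> {I1, I2}"
      hence "(\<lambda>I. if I = w then 1 else 0) \<in> \<Phi>" using that(2) unfolding \<Phi>_def by blast
      hence "(\<Sum>I\<in>S. (if I = w then 1 else 0) * b I) = 0" using g unfolding Good_def
        using bspec[of \<Phi> "\<lambda>m. (\<Sum>I\<in>S. m I * b I) = 0" "\<lambda>I. if I = w then 1 else 0"] by simp
      hence "b w = 0" using supp[of w] unfolding sum_indicator_mult[OF fS] by (auto split: if_splits)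
      thus False using that(1) by simp
    qed
    ultimately show ?thesis unfolding chenB0_def by blast
  qed
  have "y \<in> tspan {(\<lambda>w u. b w * F u) | b F. b \<in> chenB0 \<and> fin_supp F}"
    using yz(1) by (rule tspan_mono) (auto simp: Gen_def intro: GB)
  moreover have "finite {w. z w \<noteq> (\<lambda>_. 0)}"
    using yz(2) by (intro finite_subset[OF _ fS]) auto
  ultimately have "in_B0_U T" unfolding in_B0_U_def using yz(3,4) by blast
  thus ?thesis unfolding T_def .
qed

end
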